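(* Let $q\ge2$, $m\ge0$. If $m\ge1$, fix a partition of $\mathbb{Z}_q^m$ into $q$ distance-$2$ MDS codes $M^1,\dots,M^q$ of $H(m,q)$. For $0\le t\le q$ and $1\le i\le q$, let $G^i_t$ be the map $\mathbb{Z}_q^m\to\{1,2\}$ equal to $1$ exactly on $\bigcup_{j=i}^{i+t-1}M^j$ (indices taken cyclically in $\{1,\dots,q\}$) if $m\ge1$; if $m=0$ ($H(0,q)$ is a single vertex), $G^i_t$ gives that vertex color $1$ if $1\le i\le t$ and color $2$ if $t<i\le q$. Let $\mathbf{l}$ denote the constant map $\mathbb{Z}_q^m\to\{l\}$. (1) Let $f$ be a perfect $(q+1)$-coloring of $H(n,q)$ with quotient matrix whose entries are: $s_{i,i}=\alpha'$ and $s_{i,j}=\alpha$ for $1\le i\ne j\le q$; $s_{i,q+1}=\beta$ for $i\le q$; $s_{q+1,j}=\gamma$ for $j\le q$; $s_{q+1,q+1}=\delta$. If $m=\gamma-\alpha\ge0$, then for every $t\in\{0,\dots,q\}$ and $l\in\{1,2\}$ with $t(l-1)+(q-t)(2-l)\ne0$, the invasion $h_l=f\times(G^1_t,\dots,G^q_t,\mathbf{l})$ is a $(b_l,c_l)$-coloring of $H(n+m,q)$ with $b_l=\gamma(q-t)+\beta(l-1)$ and $c_l=\gamma t+\beta(2-l)$. (2) Let $f$ be a perfect $2q$-coloring of $H(n,q)$ with quotient matrix $(s_{i,j})$ where $s_{i,j}=\alpha$ for $i,j\le q$; $s_{i,j}=\beta$ for $i\le q<j$; $s_{i,j}=\gamma$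 for $j\le q<i$; $s_{i,j}=\delta$ for $i,j>q$. If $m=\gamma-\alpha=\beta-\delta\ge0$, then for all $t_1,t_2\in\{0,\dots,q\}$ with $t_1+t_2\notin\{0,2q\}$ the invasion $h=f\times(G^1_{t_1},\dots,G^q_{t_1},G^1_{t_2},\dots,G^q_{t_2})$ is a $(b,c)$-coloring of $H(n+m,q)$ with $b=q(\gamma+\beta)-\gamma t_1-\beta t_2$ and $c=\gamma t_1+\beta t_2$.
   Context: The Hamming graph $H(n,q)$ has vertex set $\mathbb{Z}_q^n$, two vertices adjacent iff they differ in exactly one coordinate. A perfect $k$-coloring is a surjective map from the vertex set onto $\{1,\dots,k\}$ such that every vertex of color $i$ has exactly $s_{i,j}$ neighbours of color $j$; $(s_{i,j})$ is its quotient matrix. A $(b,c)$-coloring of $H(N,q)$ is a perfect $2$-coloring in which each color-1 vertex has exactly $b$ neighbours of color 2 and each color-2 vertex has exactly $c$ neighbours of color 1. A distance-$2$ MDS code in $H(m,q)$ is a set of $q^{m-1}$ vertices with pairwise Hamming distance at least $2$. Given a $k$-coloring $f$ of $H(n,q)$ and maps $g_1,\dots,g_k:\mathbb{Z}_q^m\to\{1,2\}$, the invasion $f\times(g_1,\dots,g_k)$ is the map on $\mathbb{Z}_q^{n+m}$ given by $(x,y)\mapsto g_{f(x)}(y)$ for $x\in\mathbb{Z}_q^n$, $y\in\mathbb{Z}_q^m$. *)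

theory Defs
  imports Main
begin

definition hverts :: "nat \<Rightarrow> nat \<Rightarrow> nat list set" where
  "hverts n q = {x. length x = n \<and> (\<forall>a\<in>set x. a < q)}"

definition hdist :: "nat list \<Rightarrow> nat list \<Rightarrow> nat" where
  "hdist x y = card {i. i < length x \<and> x ! i \<noteq> y ! i}"

definition perfect_coloring ::
  "nat \<Rightarrow> nat \<Rightarrow> nat \<Rightarrow> (nat list \<Rightarrow> nat) \<Rightarrow> (nat \<Rightarrow> nat \<Rightarrow> nat) \<Rightarrow> bool" where
  "perfect_coloring n q k f S \<longleftrightarrow>
     f ` hverts n q = {1..k} \<and>
     (\<forall>x\<in>hverts n q. \<forall>j\<in>{1..k}.
        card {y\<in>hverts n q. hdist x y = 1 \<and> f y = j} = S (f x) j)"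

definition bc_coloring ::
  "nat \<Rightarrow> nat \<Rightarrow> (nat list \<Rightarrow> nat) \<Rightarrow> nat \<Rightarrow> nat \<Rightarrow> bool" where
  "bc_coloring N q h b c \<longleftrightarrow>
     (\<exists>S. perfect_coloring N q 2 h S \<and> S 1 2 = b \<and> S 2 1 = c)"

definition mds2_code :: "nat \<Rightarrow> nat \<Rightarrow> nat list set \<Rightarrow> bool" where
  "mds2_code m q C \<longleftrightarrow> C \<subseteq> hverts m q \<and> card C = q ^ (m - 1) \<and>
     (\<forall>x\<in>C. \<forall>y\<in>C. x \<noteq> y \<longrightarrow> hdist x y \<ge> 2)"

definition mds2_partition :: "nat \<Rightarrow> nat \<Rightarrow> (nat \<Rightarrow> nat list set) \<Rightarrow> bool" where
  "mds2_partition m q M \<longleftrightarrow>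
     (\<forall>j\<in>{1..q}. mds2_code m q (M j)) \<and>
     (\<forall>i\<in>{1..q}. \<forall>j\<in>{1..q}. i \<noteq> j \<longrightarrow> M i \<inter> M j = {}) \<and>
     (\<Union>j\<in>{1..q}. M j) = hverts m q"

definition Gmap :: "nat \<Rightarrow> nat \<Rightarrow> (nat \<Rightarrow> nat list set) \<Rightarrow> nat \<Rightarrow> nat \<Rightarrow> nat list \<Rightarrow> nat" where
  "Gmap m q M i t y =
     (if 1 \<le> m then
        (if y \<in> (\<Union>s\<in>{..<t}. M ((i + s - 1) mod q + 1)) then 1 else 2)
      else (if 1 \<le> i \<and> i \<le> t then 1 else 2))"

definition invasion :: "nat \<Rightarrow> (nat list \<Rightarrow> nat) \<Rightarrow> (nat \<Rightarrow> nat list \<Rightarrow> nat) \<Rightarrow> nat list \<Rightarrow> nat" where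
  "invasion n f g z = g (f (take n z)) (drop n z)"

end

theory Submission
  imports Defs
begin


lemma hverts_eq: "hverts n q = {xs. set xs \<subseteq> {..<q} \<and> length xs = n}"
  by (auto simp: hverts_def)

lemma finite_hverts: "finite (hverts n q)"
  unfolding hverts_eq by (rule finite_lists_length_eq) simp

lemma card_hverts: "card (hverts n q) = q ^ n"
  unfolding hverts_eq by (subst card_lists_length_eq) simp_all

lemma hdist_alt: "length x = length y \<Longrightarrow>
   hdist x y = length (filter (\<lambda>(a,b). a \<noteq> b) (zip x y))"
  unfolding hdist_def length_filter_conv_card
  by (auto intro!: arg_cong[where f=card])

lemma hdist_append: "length x1 = length x2 \<Longrightarrow> length y1 = length y2 \<Longrightarrow>
   hdist (x1@y1) (x2@y2) = hdist x1 x2 + hdist y1 y2"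
  by (simp add: hdist_alt zip_append)

lemma hdist_0: "length x = length y \<Longrightarrow> hdist x y = 0 \<longleftrightarrow> x = y"
proof -
  assume l: "length x = length y"
  have fin: "finite {i. i < length x \<and> x!i \<noteq> y!i}"
    by (rule finite_subset[of _ "{..<length x}"]) auto
  have "hdist x y = 0 \<longleftrightarrow> (\<forall>i<length x. x!i = y!i)"
    using fin by (auto simp: hdist_def)
  then show ?thesis using l by (simp add: list_eq_iff_nth_eq)
qed

lemma hdist_self: "hdist x x = 0"
  using hdist_0 by simp

lemma hdist_upd: "i < length y \<Longrightarrow> hdist y (y[i:=a]) = (if y!i \<noteq> a then 1 else 0)"
proof -
  assume i: "i < length y"
  have "{j. j < length y \<and> y!j \<noteq> y[i:=a]!j} = (if y!i \<noteq> a then {i} else {})"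
    using i by (auto simp: nth_list_update)
  then show ?thesis by (simp add: hdist_def)
qed

lemma hdist1_upd: "length z = length y \<Longrightarrow> hdist y z = 1 \<Longrightarrow>
   \<exists>i<length y. z = y[i := z!i] \<and> z!i \<noteq> y!i"
proof -
  assume l: "length z = length y" and h: "hdist y z = 1"
  from h obtain i where i: "{j. j < length y \<and> y!j \<noteq> z!j} = {i}"
    unfolding hdist_def by (rule card_1_singletonE)
  then have il: "i < length y" and ne: "y!i \<noteq> z!i" by auto
  have eq: "\<And>j. j < length y \<Longrightarrow> j \<noteq> i \<Longrightarrow> y!j = z!j"
    using i by blast
  have "z = y[i := z!i]"
    by (rule nth_equalityI) (use l eq il in \<open>auto simp: nth_list_update\<close>)
  then show ?thesis using il ne by auto
qed

lemma nbr_char: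
  assumes y: "y \<in> hverts m q"
  shows "{z\<in>hverts m q. hdist y z = 1 \<and> P z} =
     (\<Union>i<m. (\<lambda>a. y[i:=a]) ` {a\<in>{..<q}-{y!i}. P (y[i:=a])})"
proof (intro equalityI subsetI)
  fix z assume "z \<in> {z\<in>hverts m q. hdist y z = 1 \<and> P z}"
  then have z: "z \<in> hverts m q" "hdist y z = 1" "P z" by auto
  then obtain i where i: "i < length y" "z = y[i := z!i]" "z!i \<noteq> y!i"
    using hdist1_upd[of z y] y by (auto simp: hverts_def)
  have "z!i < q" using z(1) i(1) y by (auto simp: hverts_def)
  then show "z \<in> (\<Union>i<m. (\<lambda>a. y[i:=a]) ` {a\<in>{..<q}-{y!i}. P (y[i:=a])})"
    using i z y by (auto simp: hverts_def intro!: image_eqI[where x="z!i"])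
next
  fix z assume "z \<in> (\<Union>i<m. (\<lambda>a. y[i:=a]) ` {a\<in>{..<q}-{y!i}. P (y[i:=a])})"
  then obtain i a where ia: "i < m" "a < q" "a \<noteq> y!i" "P (y[i:=a])" "z = y[i:=a]" by auto
  have "z \<in> hverts m q" using ia y set_update_subset_insert[of y i a]
    by (auto simp: hverts_def)
  moreover have "hdist y z = 1" using ia y hdist_upd[of i y a] by (auto simp: hverts_def)
  ultimately show "z \<in> {z\<in>hverts m q. hdist y z = 1 \<and> P z}" using ia by auto
qed

lemma card_nbr:
  assumes y: "y \<in> hverts m q"
  shows "card {z\<in>hverts m q. hdist y z = 1 \<and> P z} =
     (\<Sum>i<m. card {a\<in>{..<q}-{y!i}. P (y[i:=a])})"
proof -
  have ly: "length y = m" using y by (simp add: hverts_def)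
  have "card (\<Union>i<m. (\<lambda>a. y[i:=a]) ` {a\<in>{..<q}-{y!i}. P (y[i:=a])}) =
      (\<Sum>i<m. card ((\<lambda>a. y[i:=a]) ` {a\<in>{..<q}-{y!i}. P (y[i:=a])}))"
  proof (rule card_UN_disjoint)
    show "\<forall>i\<in>{..<m}. \<forall>j\<in>{..<m}. i \<noteq> j \<longrightarrow>
      (\<lambda>a. y[i:=a]) ` {a\<in>{..<q}-{y!i}. P (y[i:=a])} \<inter>
      (\<lambda>a. y[j:=a]) ` {a\<in>{..<q}-{y!j}. P (y[j:=a])} = {}"
    proof (intro ballI impI equalityI subsetI)
      fix i j z assume ij: "i \<in> {..<m}" "j \<in> {..<m}" "i \<noteq> j"
        and z: "z \<in> (\<lambda>a. y[i:=a]) ` {a\<in>{..<q}-{y!i}. P (y[i:=a])} \<inter>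
      (\<lambda>a. y[j:=a]) ` {a\<in>{..<q}-{y!j}. P (y[j:=a])}"
      then obtain a b where "a \<noteq> y!i" "y[i:=a] = y[j:=b]" by auto
      then have "y[i:=a]!i = y[j:=b]!i" by simp
      then show "z \<in> {}" using ij ly \<open>a \<noteq> y!i\<close> by (auto simp: nth_list_update)
    qed simp
  qed auto
  also have "\<dots> = (\<Sum>i<m. card {a\<in>{..<q}-{y!i}. P (y[i:=a])})"
  proof (rule sum.cong[OF refl], rule card_image)
    fix i assume "i \<in> {..<m}"
    then show "inj_on (\<lambda>a. y[i:=a]) {a\<in>{..<q}-{y!i}. P (y[i:=a])}"
      using ly by (auto simp: inj_on_def dest: arg_cong[where f="\<lambda>l. l!i"])
  qed
  finally show ?thesis using nbr_char[OF y] by simp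
qed

lemma degree: "y \<in> hverts m q \<Longrightarrow> card {z\<in>hverts m q. hdist y z = 1} = m * (q - 1)"
proof -
  assume y: "y \<in> hverts m q"
  have "card {z\<in>hverts m q. hdist y z = 1 \<and> True} = (\<Sum>i<m. card {a\<in>{..<q}-{y!i}. True})"
    by (rule card_nbr[OF y])
  also have "\<dots> = (\<Sum>i<m. q - 1)"
  proof (rule sum.cong[OF refl])
    fix i assume "i \<in> {..<m}"
    then have "y!i < q" using y by (auto simp: hverts_def)
    moreover have "{a\<in>{..<q}-{y!i}. True} = {..<q} - {y!i}" by auto
    ultimately show "card {a\<in>{..<q}-{y!i}. True} = q - 1" by (simp add: card_Diff_singleton)
  qed
  finally show ?thesis by simp
qed



definition delc :: "nat \<Rightarrow> nat list \<Rightarrow> nat list" where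
  "delc i z = take i z @ drop (Suc i) z"

lemma delc_eq: "length a = length b \<Longrightarrow> i < length a \<Longrightarrow> delc i a = delc i b \<Longrightarrow> b = a[i := b!i]"
proof -
  assume l: "length a = length b" and i: "i < length a" and d: "delc i a = delc i b"
  have "take i a = take i b \<and> drop (Suc i) a = drop (Suc i) b"
    using d l i unfolding delc_def by (subst (asm) append_eq_append_conv) auto
  then show ?thesis
    using id_take_nth_drop[of i b] upd_conv_take_nth_drop[of i a "b!i"] l i by simp
qed

lemma delc_hverts: "z \<in> hverts m q \<Longrightarrow> i < m \<Longrightarrow> delc i z \<in> hverts (m-1) q"
  by (auto simp: hverts_def delc_def dest: in_set_takeD in_set_dropD)

lemma mds_line:
  assumes C: "mds2_code m q C" and y: "y \<in> hverts m q" and i: "i < m"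
  shows "card {a\<in>{..<q}. y[i:=a] \<in> C} = 1"
proof -
  have Csub: "C \<subseteq> hverts m q" and cardC: "card C = q^(m-1)"
    and dist: "\<And>x z. x \<in> C \<Longrightarrow> z \<in> C \<Longrightarrow> x \<noteq> z \<Longrightarrow> hdist x z \<ge> 2"
    using C by (auto simp: mds2_code_def)
  have ly: "length y = m" using y by (simp add: hverts_def)
  have inj: "inj_on (delc i) C"
  proof (rule inj_onI)
    fix c c' assume c: "c \<in> C" "c' \<in> C" "delc i c = delc i c'"
    have lc: "length c = m" "length c' = m" using c Csub by (auto simp: hverts_def)
    have e: "c' = c[i := c'!i]" using delc_eq[of c c' i] c lc i by simp
    have "hdist c c' \<le> 1" using hdist_upd[of i c "c'!i"] lc i e by simp
    then show "c = c'" using dist[OF c(1) c(2)] by fastforce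
  qed
  have fin: "finite (hverts (m-1) q)" by (rule finite_hverts)
  have "delc i ` C = hverts (m-1) q"
  proof (rule card_subset_eq[OF fin])
    show "delc i ` C \<subseteq> hverts (m-1) q" using Csub delc_hverts i by blast
    show "card (delc i ` C) = card (hverts (m-1) q)"
      using card_image[OF inj] cardC card_hverts by simp
  qed
  then obtain c where c: "c \<in> C" "delc i c = delc i y"
    using delc_hverts[OF y i] by (metis imageE)
  have lc: "length c = m" using c Csub by (auto simp: hverts_def)
  have ce: "c = y[i := c!i]" using delc_eq[of y c i] c lc ly i by simp
  have cq: "c!i < q" using c Csub lc i by (auto simp: hverts_def)
  have "{a\<in>{..<q}. y[i:=a] \<in> C} = {c!i}"
  proof (intro equalityI subsetI)
    fix a assume a: "a \<in> {a\<in>{..<q}. y[i:=a] \<in> C}"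
    show "a \<in> {c!i}"
    proof (rule ccontr)
      assume ne: "a \<notin> {c!i}"
      have "hdist (y[i:=a]) ((y[i:=a])[i:=c!i]) = 1"
        using hdist_upd[of i "y[i:=a]" "c!i"] ne ly i by simp
      moreover have "y[i:=a] \<noteq> c"
        using ne ly i by (metis ce nth_list_update_eq singletonI)
      ultimately show False using dist[of "y[i:=a]" c] a c ce by auto
    qed
  next
    fix a assume "a \<in> {c!i}"
    then show "a \<in> {a\<in>{..<q}. y[i:=a] \<in> C}" using cq c ce by auto
  qed
  then show ?thesis by simp
qed

lemma mds_nbr_in:
  assumes C: "mds2_code m q C" and y: "y \<in> C"
  shows "{z\<in>hverts m q. hdist y z = 1 \<and> z \<in> C} = {}"
proof -
  have dist: "\<And>x z. x \<in> C \<Longrightarrow> z \<in> C \<Longrightarrow> x \<noteq> z \<Longrightarrow> hdist x z \<ge> 2"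
    using C by (auto simp: mds2_code_def)
  show ?thesis using dist[OF y] hdist_self[of y] by fastforce
qed

lemma mds_nbr_out:
  assumes C: "mds2_code m q C" and y: "y \<in> hverts m q" and yC: "y \<notin> C"
  shows "card {z\<in>hverts m q. hdist y z = 1 \<and> z \<in> C} = m"
proof -
  have "card {z\<in>hverts m q. hdist y z = 1 \<and> z \<in> C} = (\<Sum>i<m. card {a\<in>{..<q}-{y!i}. y[i:=a] \<in> C})"
    by (rule card_nbr[OF y])
  also have "\<dots> = (\<Sum>i<m. 1)"
  proof (rule sum.cong[OF refl])
    fix i assume i: "i \<in> {..<m}"
    have "{a\<in>{..<q}-{y!i}. y[i:=a] \<in> C} = {a\<in>{..<q}. y[i:=a] \<in> C}"
      using yC by auto
    then show "card {a\<in>{..<q}-{y!i}. y[i:=a] \<in> C} = 1" using mds_line[OF C y] i by simp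
  qed
  finally show ?thesis by simp
qed

lemma part_nbr:
  assumes P: "mds2_partition m q M" and y: "y \<in> hverts m q" and j: "j \<in> {1..q}" and yj: "y \<in> M j"
    and W: "W \<subseteq> {1..q}" and jW: "j \<notin> W"
  shows "card {z\<in>hverts m q. hdist y z = 1 \<and> z \<in> (\<Union>k\<in>W. M k)} = m * card W"
proof -
  have codes: "\<And>k. k \<in> {1..q} \<Longrightarrow> mds2_code m q (M k)"
    and disj: "\<And>k k'. k \<in> {1..q} \<Longrightarrow> k' \<in> {1..q} \<Longrightarrow> k \<noteq> k' \<Longrightarrow> M k \<inter> M k' = {}"
    using P by (auto simp: mds2_partition_def)
  have finW: "finite W" using W finite_subset by blast
  have "{z\<in>hverts m q. hdist y z = 1 \<and> z \<in> (\<Union>k\<in>W. M k)} =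
        (\<Union>k\<in>W. {z\<in>hverts m q. hdist y z = 1 \<and> z \<in> M k})" by auto
  moreover have "card (\<Union>k\<in>W. {z\<in>hverts m q. hdist y z = 1 \<and> z \<in> M k}) =
        (\<Sum>k\<in>W. card {z\<in>hverts m q. hdist y z = 1 \<and> z \<in> M k})"
  proof (rule card_UN_disjoint)
    show "\<forall>k\<in>W. \<forall>k'\<in>W. k \<noteq> k' \<longrightarrow> {z\<in>hverts m q. hdist y z = 1 \<and> z \<in> M k} \<inter> {z\<in>hverts m q. hdist y z = 1 \<and> z \<in> M k'} = {}"
      using disj W by blast
  qed (use finW finite_hverts in auto)
  moreover have "(\<Sum>k\<in>W. card {z\<in>hverts m q. hdist y z = 1 \<and> z \<in> M k}) = (\<Sum>k\<in>W. m)"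
  proof (rule sum.cong[OF refl])
    fix k assume k: "k \<in> W"
    have kq: "k \<in> {1..q}" using k W by blast
    have "y \<notin> M k" using disj[of j k] j kq k jW yj by blast
    then show "card {z\<in>hverts m q. hdist y z = 1 \<and> z \<in> M k} = m"
      using mds_nbr_out[OF codes y] k W by auto
  qed
  ultimately show ?thesis by simp
qed

lemma mod_lt2: "(a::nat) < 2*q \<Longrightarrow> a mod q = (if a < q then a else a - q)"
proof (cases "a < q")
  case False
  assume "a < 2*q"
  then have "a - q < q" by simp
  have "a mod q = (a - q) mod q" using False by (simp add: le_mod_geq)
  then show ?thesis using False \<open>a - q < q\<close> by simp
qed simp

lemma win_card: "i \<in> {1..(q::nat)} \<Longrightarrow> t \<le> q \<Longrightarrow> card ((\<lambda>s. (i+s-1) mod q + 1) ` {..<t}) = t"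
proof -
  assume i: "i \<in> {1..q}" and t: "t \<le> q"
  have "inj_on (\<lambda>s. (i+s-1) mod q + 1) {..<t}"
  proof (rule inj_onI)
    fix s s' assume s: "s \<in> {..<t}" "s' \<in> {..<t}" "(i+s-1) mod q + 1 = (i+s'-1) mod q + 1"
    have "i+s-1 < 2*q" "i+s'-1 < 2*q" using s i t by auto
    then show "s = s'" using s(3) i s t by (simp add: mod_lt2 split: if_splits)
  qed
  then show ?thesis by (simp add: card_image)
qed

lemma win_mem: "i \<in> {1..(q::nat)} \<Longrightarrow> j \<in> {1..q} \<Longrightarrow> t \<le> q \<Longrightarrow>
  (j \<in> (\<lambda>s. (i+s-1) mod q + 1) ` {..<t}) \<longleftrightarrow> (if i \<le> j then j - i else j + q - i) < t"
proof -
  assume i: "i \<in> {1..q}" and j: "j \<in> {1..q}" and t: "t \<le> q"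
  show ?thesis
  proof
    assume "j \<in> (\<lambda>s. (i+s-1) mod q + 1) ` {..<t}"
    then obtain s where s: "s < t" "j = (i+s-1) mod q + 1" by auto
    have "i+s-1 < 2*q" using s i t by auto
    then show "(if i \<le> j then j - i else j + q - i) < t" using s i j t
      by (simp add: mod_lt2 split: if_splits)
  next
    assume a: "(if i \<le> j then j - i else j + q - i) < t"
    define s where "s = (if i \<le> j then j - i else j + q - i)"
    have "i+s-1 < 2*q" using s_def i j t by auto
    then have "j = (i+s-1) mod q + 1" using s_def i j by (simp add: mod_lt2 split: if_splits; arith)
    then show "j \<in> (\<lambda>s. (i+s-1) mod q + 1) ` {..<t}" using a s_def by auto
  qed
qed

lemma win_count: "j \<in> {1..(q::nat)} \<Longrightarrow> t \<le> q \<Longrightarrow>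
   card {i\<in>{1..q}. (if i \<le> j then j - i else j + q - i) < t} = t"
proof -
  assume j: "j \<in> {1..q}" and t: "t \<le> q"
  define \<psi> where "\<psi> = (\<lambda>i. if i \<le> j then j - i else j + q - i)"
  have inj: "inj_on \<psi> {1..q}" using j unfolding \<psi>_def by (auto simp: inj_on_def split: if_splits)
  have im: "\<psi> ` {1..q} = {..<q}"
  proof (rule card_subset_eq)
    show "\<psi> ` {1..q} \<subseteq> {..<q}" using j unfolding \<psi>_def by auto
    show "card (\<psi> ` {1..q}) = card {..<q}" using card_image[OF inj] by simp
  qed simp
  have "\<psi> ` {i\<in>{1..q}. \<psi> i < t} = {..<t}"
  proof (intro equalityI subsetI)
    fix s assume "s \<in> {..<t}"
    then have "s \<in> \<psi> ` {1..q}" using im t by auto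
    then show "s \<in> \<psi> ` {i\<in>{1..q}. \<psi> i < t}" using \<open>s \<in> {..<t}\<close> by auto
  qed auto
  moreover have "card (\<psi> ` {i\<in>{1..q}. \<psi> i < t}) = card {i\<in>{1..q}. \<psi> i < t}"
    by (rule card_image) (rule inj_on_subset[OF inj], auto)
  ultimately show ?thesis unfolding \<psi>_def by simp
qed



lemma Gmap_pos: "1 \<le> m \<Longrightarrow> Gmap m q M i t y =
   (if y \<in> (\<Union>k\<in>(\<lambda>s. (i+s-1) mod q + 1) ` {..<t}. M k) then 1 else 2)"
  by (simp add: Gmap_def)

lemma Gmap_12: "Gmap m q M i t y \<in> {1,2}"
  by (simp add: Gmap_def)

lemma win_sub: "(\<lambda>s. (i+s-1) mod q + 1) ` {..<t} \<subseteq> {1..q}" if "(q::nat) \<ge> 1"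
proof (rule image_subsetI)
  fix s
  have "(i+s-1) mod q < q" using that by simp
  then show "(i+s-1) mod q + 1 \<in> {1..q}" by simp
qed

lemma part_find: "mds2_partition m q M \<Longrightarrow> y \<in> hverts m q \<Longrightarrow> \<exists>j\<in>{1..q}. y \<in> M j"
proof -
  assume "mds2_partition m q M" "y \<in> hverts m q"
  then have "y \<in> (\<Union>j\<in>{1..q}. M j)" unfolding mds2_partition_def by simp
  then show ?thesis by simp
qed

lemma part_disj: "mds2_partition m q M \<Longrightarrow> i \<in> {1..q} \<Longrightarrow> j \<in> {1..q} \<Longrightarrow> i \<noteq> j \<Longrightarrow> y \<in> M i \<Longrightarrow> y \<notin> M j"
  unfolding mds2_partition_def by blast

lemma part_mem: "mds2_partition m q M \<Longrightarrow> j \<in> {1..q} \<Longrightarrow> y \<in> M j \<Longrightarrow> W \<subseteq> {1..q} \<Longrightarrow>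
   y \<in> (\<Union>k\<in>W. M k) \<longleftrightarrow> j \<in> W"
  using part_disj[of m q M j] by blast

lemma G_count:
  assumes q2: "q \<ge> 2" and part: "1 \<le> m \<Longrightarrow> mds2_partition m q M" and t: "t \<le> q"
    and y: "y \<in> hverts m q"
  shows "card {i\<in>{1..q}. Gmap m q M i t y = 1} = t"
proof (cases "1 \<le> m")
  case False
  then have "{i\<in>{1..q}. Gmap m q M i t y = 1} = {1..t}" using t by (auto simp: Gmap_def)
  then show ?thesis by simp
next
  case True
  note P = part[OF True]
  obtain j where j: "j \<in> {1..q}" "y \<in> M j" using part_find[OF P y] by blast
  have "{i\<in>{1..q}. Gmap m q M i t y = 1} = {i\<in>{1..q}. (if i \<le> j then j - i else j + q - i) < t}"
  proof (intro Collect_cong conj_cong refl)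
    fix i assume i: "i \<in> {1..q}"
    have "Gmap m q M i t y = 1 \<longleftrightarrow> j \<in> (\<lambda>s. (i+s-1) mod q + 1) ` {..<t}"
      using Gmap_pos[OF True] part_mem[OF P j win_sub] q2 by simp
    also have "\<dots> \<longleftrightarrow> (if i \<le> j then j - i else j + q - i) < t" using win_mem[OF i j(1) t] .
    finally show "Gmap m q M i t y = 1 \<longleftrightarrow> (if i \<le> j then j - i else j + q - i) < t" .
  qed
  then show ?thesis using win_count[OF j(1) t] by simp
qed

lemma G_nbr:
  assumes q2: "q \<ge> 2" and part: "1 \<le> m \<Longrightarrow> mds2_partition m q M" and t: "t \<le> q"
    and y: "y \<in> hverts m q" and i: "i \<in> {1..q}"
  shows "card {z\<in>hverts m q. hdist y z = 1 \<and> Gmap m q M i t z \<noteq> Gmap m q M i t y}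
     = m * (if Gmap m q M i t y = 1 then q - t else t)"
proof (cases "1 \<le> m")
  case False
  then have "m = 0" by simp
  then have "{z\<in>hverts m q. hdist y z = 1 \<and> Gmap m q M i t z \<noteq> Gmap m q M i t y} = {}"
    using y by (auto simp: hverts_def hdist_def)
  then have "card {z\<in>hverts m q. hdist y z = 1 \<and> Gmap m q M i t z \<noteq> Gmap m q M i t y} = 0"
    by (simp only: card.empty)
  then show ?thesis using \<open>m = 0\<close> by simp
next
  case True
  note P = part[OF True]
  obtain j where j: "j \<in> {1..q}" "y \<in> M j" using part_find[OF P y] by blast
  define W where "W = (\<lambda>s. (i+s-1) mod q + 1) ` {..<t}"
  have W: "W \<subseteq> {1..q}" unfolding W_def using win_sub q2 by simp
  have cW: "card W = t" unfolding W_def using win_card[OF i t] .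
  have G: "\<And>z. Gmap m q M i t z = (if z \<in> (\<Union>k\<in>W. M k) then 1 else 2)"
    unfolding W_def by (rule Gmap_pos[OF True])
  have cover: "\<And>z. z \<in> hverts m q \<Longrightarrow> z \<in> (\<Union>k\<in>W. M k) \<or> z \<in> (\<Union>k\<in>{1..q}-W. M k)"
    using part_find[OF P] by blast
  have excl: "\<And>z. z \<in> (\<Union>k\<in>W. M k) \<Longrightarrow> z \<notin> (\<Union>k\<in>{1..q}-W. M k)"
    using part_disj[OF P] W by blast
  show ?thesis
  proof (cases "j \<in> W")
    case True
    have yin: "y \<in> (\<Union>k\<in>W. M k)" using True j by blast
    have "{z\<in>hverts m q. hdist y z = 1 \<and> Gmap m q M i t z \<noteq> Gmap m q M i t y}
        = {z\<in>hverts m q. hdist y z = 1 \<and> z \<in> (\<Union>k\<in>{1..q}-W. M k)}"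
    proof -
      have eqv: "\<And>z. z \<in> hverts m q \<Longrightarrow> Gmap m q M i t z \<noteq> Gmap m q M i t y \<longleftrightarrow> z \<in> (\<Union>k\<in>{1..q}-W. M k)"
      proof -
        fix z assume z: "z \<in> hverts m q"
        show "Gmap m q M i t z \<noteq> Gmap m q M i t y \<longleftrightarrow> z \<in> (\<Union>k\<in>{1..q}-W. M k)"
          using cover[OF z] excl[of z] yin unfolding G by auto
      qed
      show ?thesis using eqv by blast
    qed
    also have "card \<dots> = m * card ({1..q}-W)"
      by (rule part_nbr[OF P y j(1) j(2)]) (use True in auto)
    finally show ?thesis using yin cW W by (simp add: G card_Diff_subset finite_subset)
  next
    case False
    have yout: "y \<notin> (\<Union>k\<in>W. M k)" using part_mem[OF P j W] False by simp
    have "{z\<in>hverts m q. hdist y z = 1 \<and> Gmap m q M i t z \<noteq> Gmap m q M i t y}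
        = {z\<in>hverts m q. hdist y z = 1 \<and> z \<in> (\<Union>k\<in>W. M k)}"
      using yout by (auto simp: G)
    also have "card \<dots> = m * card W"
      by (rule part_nbr[OF P y j(1) j(2) W False])
    finally show ?thesis using yout cW by (simp add: G)
  qed
qed



lemma card_nbr_append:
  assumes x: "x \<in> hverts n q" and y: "y \<in> hverts m q"
  shows "card {z\<in>hverts (n+m) q. hdist (x@y) z = 1 \<and> P z} =
    card {x'\<in>hverts n q. hdist x x' = 1 \<and> P (x'@y)} + card {y'\<in>hverts m q. hdist y y' = 1 \<and> P (x@y')}"
proof -
  define A where "A = {x'\<in>hverts n q. hdist x x' = 1 \<and> P (x'@y)}"
  define B where "B = {y'\<in>hverts m q. hdist y y' = 1 \<and> P (x@y')}"
  have lx: "length x = n" and ly: "length y = m" using x y by (auto simp: hverts_def)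
  have eq: "{z\<in>hverts (n+m) q. hdist (x@y) z = 1 \<and> P z} = (\<lambda>x'. x'@y) ` A \<union> (\<lambda>y'. x@y') ` B"
  proof (intro equalityI subsetI)
    fix z assume z: "z \<in> {z\<in>hverts (n+m) q. hdist (x@y) z = 1 \<and> P z}"
    define x' y' where "x' = take n z" and "y' = drop n z"
    have zz: "z = x'@y'" unfolding x'_def y'_def by simp
    have hx: "x' \<in> hverts n q" and hy: "y' \<in> hverts m q"
      using z unfolding x'_def y'_def by (auto simp: hverts_def dest: in_set_takeD in_set_dropD)
    have lx': "length x' = n" and ly': "length y' = m" using hx hy by (auto simp: hverts_def)
    have d: "hdist x x' + hdist y y' = 1"
      using z zz hdist_append[of x x' y y'] lx ly lx' ly' by simp
    show "z \<in> (\<lambda>x'. x'@y) ` A \<union> (\<lambda>y'. x@y') ` B"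
    proof (cases "hdist y y' = 0")
      case True
      then have "y' = y" using hdist_0[of y y'] ly ly' by simp
      then show ?thesis using d True z zz hx unfolding A_def by auto
    next
      case False
      then have "hdist x x' = 0" using d by simp
      then have "x' = x" using hdist_0[of x x'] lx lx' by simp
      then show ?thesis using d False z zz hy unfolding B_def by auto
    qed
  next
    fix z assume "z \<in> (\<lambda>x'. x'@y) ` A \<union> (\<lambda>y'. x@y') ` B"
    then show "z \<in> {z\<in>hverts (n+m) q. hdist (x@y) z = 1 \<and> P z}"
    proof
      assume "z \<in> (\<lambda>x'. x'@y) ` A"
      then obtain x' where "x' \<in> A" "z = x'@y" by auto
      then show ?thesis using hdist_append[of x x' y y] lx ly hdist_self[of y] y
        unfolding A_def by (auto simp: hverts_def)
    next
      assume "z \<in> (\<lambda>y'. x@y') ` B"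
      then obtain y' where "y' \<in> B" "z = x@y'" by auto
      then show ?thesis using hdist_append[of x x y y'] lx ly hdist_self[of x] x
        unfolding B_def by (auto simp: hverts_def)
    qed
  qed
  have finA: "finite A" and finB: "finite B" unfolding A_def B_def using finite_hverts by auto
  have disj: "(\<lambda>x'. x'@y) ` A \<inter> (\<lambda>y'. x@y') ` B = {}"
  proof (intro equalityI subsetI)
    fix z assume "z \<in> (\<lambda>x'. x'@y) ` A \<inter> (\<lambda>y'. x@y') ` B"
    then obtain x' y' where a: "x' \<in> A" "y' \<in> B" "x'@y = x@y'" by auto
    have "length x' = length x" using a lx unfolding A_def by (auto simp: hverts_def)
    then have "x' = x" using a(3) by simp
    then show "z \<in> {}" using a(1) hdist_self[of x] unfolding A_def by simp
  qed simp
  have "card ((\<lambda>x'. x'@y) ` A \<union> (\<lambda>y'. x@y') ` B) = card ((\<lambda>x'. x'@y) ` A) + card ((\<lambda>y'. x@y') ` B)"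
    by (rule card_Un_disjoint) (use finA finB disj in auto)
  also have "\<dots> = card A + card B"
    by (simp add: card_image inj_on_def)
  finally show ?thesis using eq unfolding A_def B_def by simp
qed

lemma invasion_bc:
  assumes pc: "perfect_coloring n q K f S"
  and gv: "\<And>k y. k \<in> {1..K} \<Longrightarrow> y \<in> hverts m q \<Longrightarrow> g k y \<in> {1,2}"
  and cnt: "\<And>k y. k\<in>{1..K} \<Longrightarrow> y\<in>hverts m q \<Longrightarrow>
     (\<Sum>j\<in>{1..K}. if g j y \<noteq> g k y then S k j else 0)
     + card {y'\<in>hverts m q. hdist y y' = 1 \<and> g k y' \<noteq> g k y} = (if g k y = 1 then b else c)"
  and s1: "\<exists>k\<in>{1..K}. \<exists>y\<in>hverts m q. g k y = 1"
  and s2: "\<exists>k\<in>{1..K}. \<exists>y\<in>hverts m q. g k y = 2"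
  shows "bc_coloring (n+m) q (invasion n f g) b c"
proof -
  define h where "h = invasion n f g"
  have fim: "f ` hverts n q = {1..K}" using pc by (simp add: perfect_coloring_def)
  have fS: "\<And>x j. x\<in>hverts n q \<Longrightarrow> j\<in>{1..K} \<Longrightarrow>
     card {y\<in>hverts n q. hdist x y = 1 \<and> f y = j} = S (f x) j"
    using pc by (simp add: perfect_coloring_def)
  have fK: "\<And>x. x \<in> hverts n q \<Longrightarrow> f x \<in> {1..K}" using fim by blast
  have hz: "\<And>x y. x\<in>hverts n q \<Longrightarrow> h (x@y) = g (f x) y"
    by (simp add: h_def invasion_def hverts_def)
  have split: "\<And>z. z \<in> hverts (n+m) q \<Longrightarrow> take n z \<in> hverts n q \<and> drop n z \<in> hverts m q"
    by (auto simp: hverts_def dest: in_set_takeD in_set_dropD)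
  have hv: "\<And>z. z\<in>hverts (n+m) q \<Longrightarrow> h z \<in> {1,2}"
  proof -
    fix z assume z: "z\<in>hverts (n+m) q"
    have "h z = g (f (take n z)) (drop n z)" by (simp add: h_def invasion_def)
    then show "h z \<in> {1,2}" using gv fK split[OF z] by simp
  qed
  have key: "\<And>z. z \<in> hverts (n+m) q \<Longrightarrow>
     card {z'\<in>hverts (n+m) q. hdist z z' = 1 \<and> h z' \<noteq> h z} = (if h z = 1 then b else c)"
  proof -
    fix z assume z: "z \<in> hverts (n+m) q"
    define x y where "x = take n z" and "y = drop n z"
    have xh: "x \<in> hverts n q" and yh: "y \<in> hverts m q" using split[OF z] x_def y_def by auto
    have zeq: "z = x@y" unfolding x_def y_def by simp
    define k where "k = f x"
    have k: "k \<in> {1..K}" using fK[OF xh] k_def by simp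
    have hzk: "h z = g k y" using hz[OF xh] zeq k_def by simp
    have "card {z'\<in>hverts (n+m) q. hdist z z' = 1 \<and> h z' \<noteq> h z} =
       card {x'\<in>hverts n q. hdist x x' = 1 \<and> h (x'@y) \<noteq> h z} +
       card {y'\<in>hverts m q. hdist y y' = 1 \<and> h (x@y') \<noteq> h z}"
      using card_nbr_append[OF xh yh, of "\<lambda>z'. h z' \<noteq> h z"] zeq by simp
    also have "card {x'\<in>hverts n q. hdist x x' = 1 \<and> h (x'@y) \<noteq> h z} =
        (\<Sum>j\<in>{1..K}. if g j y \<noteq> g k y then S k j else 0)"
    proof -
      have "{x'\<in>hverts n q. hdist x x' = 1 \<and> h (x'@y) \<noteq> h z} =
         (\<Union>j\<in>{1..K}. {x'\<in>hverts n q. hdist x x' = 1 \<and> f x' = j \<and> g j y \<noteq> g k y})"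
        using fK hz hzk by auto
      moreover have "card (\<Union>j\<in>{1..K}. {x'\<in>hverts n q. hdist x x' = 1 \<and> f x' = j \<and> g j y \<noteq> g k y})
        = (\<Sum>j\<in>{1..K}. card {x'\<in>hverts n q. hdist x x' = 1 \<and> f x' = j \<and> g j y \<noteq> g k y})"
        by (rule card_UN_disjoint) (use finite_hverts in auto)
      moreover have "(\<Sum>j\<in>{1..K}. card {x'\<in>hverts n q. hdist x x' = 1 \<and> f x' = j \<and> g j y \<noteq> g k y})
        = (\<Sum>j\<in>{1..K}. if g j y \<noteq> g k y then S k j else 0)"
      proof (rule sum.cong[OF refl])
        fix j assume j: "j \<in> {1..K}"
        show "card {x'\<in>hverts n q. hdist x x' = 1 \<and> f x' = j \<and> g j y \<noteq> g k y}
          = (if g j y \<noteq> g k y then S k j else 0)"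
          using fS[OF xh j] k_def by auto
      qed
      ultimately show ?thesis by simp
    qed
    also have "card {y'\<in>hverts m q. hdist y y' = 1 \<and> h (x@y') \<noteq> h z} =
        card {y'\<in>hverts m q. hdist y y' = 1 \<and> g k y' \<noteq> g k y}"
      using hz[OF xh] hzk k_def by simp
    finally show "card {z'\<in>hverts (n+m) q. hdist z z' = 1 \<and> h z' \<noteq> h z} = (if h z = 1 then b else c)"
      using cnt[OF k yh] hzk by simp
  qed
  define S' where "S' = (\<lambda>a a'. if a = a' then (n+m)*(q-1) - (if a = (1::nat) then b else c)
                                    else (if a = 1 then b else c))"
  have "perfect_coloring (n+m) q 2 h S'"
    unfolding perfect_coloring_def
  proof (intro conjI ballI)
    show "h ` hverts (n+m) q = {1..2}"
    proof (intro equalityI subsetI)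
      fix a assume "a \<in> h ` hverts (n+m) q"
      then obtain w where "w \<in> hverts (n+m) q" "a = h w" by auto
      then have "a \<in> {1,2}" using hv by blast
      then show "a \<in> {1..2}" by auto
    next
      fix a :: nat assume a: "a \<in> {1..2}"
      have "a = 1 \<or> a = 2" using a by auto
      then obtain k y where ky: "k \<in> {1..K}" "y \<in> hverts m q" "g k y = a" using s1 s2 by blast
      obtain x where x: "x \<in> hverts n q" "f x = k" using ky(1) fim by (metis imageE)
      have "x@y \<in> hverts (n+m) q" using x ky by (auto simp: hverts_def)
      moreover have "h (x@y) = a" using hz[OF x(1)] x ky by simp
      ultimately show "a \<in> h ` hverts (n+m) q" by (metis imageI)
    qed
  next
    fix z j assume z: "z \<in> hverts (n+m) q" and j: "j \<in> {1..2::nat}"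
    show "card {y\<in>hverts (n+m) q. hdist z y = 1 \<and> h y = j} = S' (h z) j"
    proof (cases "j = h z")
      case True
      have fin: "finite {y\<in>hverts (n+m) q. hdist z y = 1}" using finite_hverts by auto
      have "{y\<in>hverts (n+m) q. hdist z y = 1} =
        {y\<in>hverts (n+m) q. hdist z y = 1 \<and> h y = h z} \<union> {y\<in>hverts (n+m) q. hdist z y = 1 \<and> h y \<noteq> h z}"
        by auto
      then have "card {y\<in>hverts (n+m) q. hdist z y = 1} =
        card {y\<in>hverts (n+m) q. hdist z y = 1 \<and> h y = h z} + card {y\<in>hverts (n+m) q. hdist z y = 1 \<and> h y \<noteq> h z}"
        using fin by (simp add: card_Un_disjoint disjoint_iff)
      then show ?thesis using degree[OF z] key[OF z] True unfolding S'_def by simp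
    next
      case False
      have "{y\<in>hverts (n+m) q. hdist z y = 1 \<and> h y = j} = {y\<in>hverts (n+m) q. hdist z y = 1 \<and> h y \<noteq> h z}"
      proof (rule Collect_cong)
        fix y
        have hzz: "h z = 1 \<or> h z = 2" using hv[OF z] by simp
        have jj: "j = 1 \<or> j = 2" using j by auto
        show "(y \<in> hverts (n+m) q \<and> hdist z y = 1 \<and> h y = j) = (y \<in> hverts (n+m) q \<and> hdist z y = 1 \<and> h y \<noteq> h z)"
          using hv[of y] hzz jj False by auto
      qed
      then show ?thesis using key[OF z] False unfolding S'_def by simp
    qed
  qed
  moreover have "S' 1 2 = b" "S' 2 1 = c" unfolding S'_def by simp_all
  ultimately show ?thesis unfolding bc_coloring_def h_def by blast
qed



lemma sum_if_const: "finite A \<Longrightarrow> (\<Sum>j\<in>A. if P j then (c::nat) else 0) = c * card {j\<in>A. P j}"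
  by (simp add: sum.inter_filter[symmetric])

lemma sum_split2: "(\<Sum>j\<in>{1..2*q}. F j) = (\<Sum>j\<in>{1..q}. F j) + (\<Sum>j\<in>{1..q}. F (j+q))" for q :: nat and F :: "nat \<Rightarrow> nat"
proof -
  have "(\<Sum>j\<in>{1..2*q}. F j) = (\<Sum>j\<in>{1..q+q}. F j)" by (simp add: mult_2)
  also have "\<dots> = (\<Sum>j\<in>{1..q}. F j) + (\<Sum>j\<in>{q+1..q+q}. F j)"
    by (rule sum.ub_add_nat) simp
  also have "(\<Sum>j\<in>{q+1..q+q}. F j) = (\<Sum>j\<in>{1..q}. F (j+q))"
    using sum.shift_bounds_cl_nat_ivl[of F 1 q q] by (simp add: add.commute)
  finally show ?thesis .
qed

lemma arith2: "t1 \<le> q \<Longrightarrow> t2 \<le> q \<Longrightarrow>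
   (g::nat)*(q-t1) + b*(q-t2) = q*(g+b) - g*t1 - b*t2"
proof -
  assume t: "t1 \<le> q" "t2 \<le> q"
  have "g*t1 \<le> g*q" "b*t2 \<le> b*q" using t by simp_all
  then show ?thesis by (simp add: diff_mult_distrib2 algebra_simps)
qed

lemma G_ne:
  assumes q2: "q \<ge> 2" and part: "1 \<le> m \<Longrightarrow> mds2_partition m q M" and t: "t \<le> q"
    and y: "y \<in> hverts m q" and a: "a \<in> {1,2}"
  shows "card {j\<in>{1..q}. Gmap m q M j t y \<noteq> a} = (if a = 1 then q - t else t)"
proof -
  have c: "card {i\<in>{1..q}. Gmap m q M i t y = 1} = t" by (rule G_count[OF q2 part t y])
  show ?thesis
  proof (cases "a = 1")
    case True
    have "{j\<in>{1..q}. Gmap m q M j t y \<noteq> a} = {1..q} - {i\<in>{1..q}. Gmap m q M i t y = 1}"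
      using True by auto
    moreover have "card ({1..q} - {i\<in>{1..q}. Gmap m q M i t y = 1}) = card {1..q} - card {i\<in>{1..q}. Gmap m q M i t y = 1}"
      by (rule card_Diff_subset) auto
    ultimately show ?thesis using c True by simp
  next
    case False
    then have "a = 2" using a by simp
    have "{j\<in>{1..q}. Gmap m q M j t y \<noteq> a} = {i\<in>{1..q}. Gmap m q M i t y = 1}"
      using \<open>a = 2\<close> Gmap_12[of m q M _ t y] by auto
    then show ?thesis using c False by simp
  qed
qed

lemma G_exists:
  assumes q2: "q \<ge> 2" and part: "1 \<le> m \<Longrightarrow> mds2_partition m q M" and t: "t \<le> q"
  shows "0 < t \<Longrightarrow> \<exists>i\<in>{1..q}. \<exists>y\<in>hverts m q. Gmap m q M i t y = 1"
    and "t < q \<Longrightarrow> \<exists>i\<in>{1..q}. \<exists>y\<in>hverts m q. Gmap m q M i t y = 2"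
proof -
  define y0 where "y0 = replicate m (0::nat)"
  have y0: "y0 \<in> hverts m q" using q2 by (simp add: y0_def hverts_def)
  have c1: "card {j\<in>{1..q}. Gmap m q M j t y0 \<noteq> 1} = q - t"
    using G_ne[OF q2 part t y0, of 1] by simp
  have c2: "card {j\<in>{1..q}. Gmap m q M j t y0 \<noteq> 2} = t"
    using G_ne[OF q2 part t y0, of 2] by simp
  show "0 < t \<Longrightarrow> \<exists>i\<in>{1..q}. \<exists>y\<in>hverts m q. Gmap m q M i t y = 1"
  proof -
    assume "0 < t"
    then have "{j\<in>{1..q}. Gmap m q M j t y0 \<noteq> 2} \<noteq> {}" using c2 by (metis card.empty less_irrefl zero_less_diff)
    then obtain i where "i \<in> {1..q}" "Gmap m q M i t y0 \<noteq> 2" by blast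
    then show ?thesis using y0 Gmap_12[of m q M i t y0] by auto
  qed
  show "t < q \<Longrightarrow> \<exists>i\<in>{1..q}. \<exists>y\<in>hverts m q. Gmap m q M i t y = 2"
  proof -
    assume "t < q"
    then have "{j\<in>{1..q}. Gmap m q M j t y0 \<noteq> 1} \<noteq> {}" using c1 by (metis card.empty less_irrefl zero_less_diff)
    then obtain i where "i \<in> {1..q}" "Gmap m q M i t y0 \<noteq> 1" by blast
    then show ?thesis using y0 Gmap_12[of m q M i t y0] by auto
  qed
qed



lemma part1:
  fixes q m :: nat and M :: "nat \<Rightarrow> nat list set"
  assumes q2: "q \<ge> 2"
    and part: "1 \<le> m \<Longrightarrow> mds2_partition m q M"
    and pc: "perfect_coloring n q (q + 1) f S"
    and Sd: "\<forall>i\<in>{1..q}. S i i = \<alpha>'"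
    and Sa: "\<forall>i\<in>{1..q}. \<forall>j\<in>{1..q}. i \<noteq> j \<longrightarrow> S i j = \<alpha>"
    and Sb: "\<forall>i\<in>{1..q}. S i (q + 1) = \<beta>"
    and Sc: "\<forall>j\<in>{1..q}. S (q + 1) j = \<gamma>"
    and gam: "\<gamma> = \<alpha> + m"
    and t: "t \<le> q" and l: "l \<in> {1, 2}" and tl: "t * (l - 1) + (q - t) * (2 - l) \<noteq> 0"
  shows "bc_coloring (n + m) q
               (invasion n f (\<lambda>k. if k \<le> q then Gmap m q M k t else (\<lambda>y. l)))
               (\<gamma> * (q - t) + \<beta> * (l - 1)) (\<gamma> * t + \<beta> * (2 - l))"
proof -
  define g where "g = (\<lambda>k. if k \<le> q then Gmap m q M k t else (\<lambda>y::nat list. l))"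
  have "bc_coloring (n+m) q (invasion n f g) (\<gamma> * (q - t) + \<beta> * (l - 1)) (\<gamma> * t + \<beta> * (2 - l))"
  proof (rule invasion_bc[OF pc])
    fix k y show "g k y \<in> {1,2}" using Gmap_12 l by (auto simp: g_def)
  next
    fix k y assume k: "k \<in> {1..q+1}" and y: "y \<in> hverts m q"
    define a where "a = g k y"
    have a12: "a = 1 \<or> a = 2" using Gmap_12 l by (auto simp: g_def a_def)
    have sumsplit: "(\<Sum>j\<in>{1..q+1}. if g j y \<noteq> a then S k j else 0) =
       (\<Sum>j\<in>{1..q}. if Gmap m q M j t y \<noteq> a then S k j else 0) + (if l \<noteq> a then S k (q+1) else 0)"
    proof -
      have "(\<Sum>j\<in>{1..q+1}. if g j y \<noteq> a then S k j else 0) =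
         (\<Sum>j\<in>{1..q}. if g j y \<noteq> a then S k j else 0) + (if g (q+1) y \<noteq> a then S k (q+1) else 0)"
        by simp
      moreover have "(\<Sum>j\<in>{1..q}. if g j y \<noteq> a then S k j else 0) = (\<Sum>j\<in>{1..q}. if Gmap m q M j t y \<noteq> a then S k j else 0)"
        by (rule sum.cong) (auto simp: g_def)
      ultimately show ?thesis by (simp add: g_def)
    qed
    show "(\<Sum>j\<in>{1..q+1}. if g j y \<noteq> g k y then S k j else 0) +
       card {y'\<in>hverts m q. hdist y y' = 1 \<and> g k y' \<noteq> g k y} =
       (if g k y = 1 then \<gamma> * (q - t) + \<beta> * (l - 1) else \<gamma> * t + \<beta> * (2 - l))"
    proof (cases "k \<le> q")
      case True
      then have kq: "k \<in> {1..q}" using k by simp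
      have ga: "a = Gmap m q M k t y" using True by (simp add: a_def g_def)
      have s1: "(\<Sum>j\<in>{1..q}. if Gmap m q M j t y \<noteq> a then S k j else 0) =
          (\<Sum>j\<in>{1..q}. if Gmap m q M j t y \<noteq> a then \<alpha> else 0)"
      proof (rule sum.cong[OF refl])
        fix j assume j: "j \<in> {1..q}"
        show "(if Gmap m q M j t y \<noteq> a then S k j else 0) = (if Gmap m q M j t y \<noteq> a then \<alpha> else 0)"
          using Sa kq ga j by (cases "j = k") auto
      qed
      have s2: "(\<Sum>j\<in>{1..q}. if Gmap m q M j t y \<noteq> a then \<alpha> else 0) = \<alpha> * (if a = 1 then q - t else t)"
        using sum_if_const[of "{1..q}" "\<lambda>j. Gmap m q M j t y \<noteq> a" \<alpha>] G_ne[OF q2 part t y, of a] a12 by auto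
      have nb: "card {y'\<in>hverts m q. hdist y y' = 1 \<and> g k y' \<noteq> g k y} = m * (if a = 1 then q - t else t)"
        using G_nbr[OF q2 part t y kq] True ga by (simp add: g_def)
      have lb: "(if l \<noteq> a then S k (q+1) else 0) = (if l \<noteq> a then \<beta> else 0)" using Sb kq by simp
      show ?thesis using sumsplit s1 s2 nb lb a12 l gam unfolding a_def[symmetric]
        by (auto simp: algebra_simps)
    next
      case False
      then have kq: "k = q+1" using k by simp
      have ga: "a = l" using kq by (simp add: a_def g_def)
      have s1: "(\<Sum>j\<in>{1..q}. if Gmap m q M j t y \<noteq> a then S k j else 0) =
          (\<Sum>j\<in>{1..q}. if Gmap m q M j t y \<noteq> a then \<gamma> else 0)"
        by (rule sum.cong) (use Sc kq in auto)
      have s2: "(\<Sum>j\<in>{1..q}. if Gmap m q M j t y \<noteq> a then \<gamma> else 0) = \<gamma> * (if a = 1 then q - t else t)"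
        using sum_if_const[of "{1..q}" "\<lambda>j. Gmap m q M j t y \<noteq> a" \<gamma>] G_ne[OF q2 part t y, of a] a12 by auto
      have "{y'\<in>hverts m q. hdist y y' = 1 \<and> g k y' \<noteq> g k y} = {}" using kq by (simp add: g_def)
      then have nb: "card {y'\<in>hverts m q. hdist y y' = 1 \<and> g k y' \<noteq> g k y} = 0" by (simp only: card.empty)
      show ?thesis using sumsplit s1 s2 nb ga a12 unfolding a_def[symmetric]
        by auto
    qed
  next
    show "\<exists>k\<in>{1..q+1}. \<exists>y\<in>hverts m q. g k y = 1"
    proof (cases "l = 1")
      case True
      have "replicate m 0 \<in> hverts m q" using q2 by (simp add: hverts_def)
      then show ?thesis using True by (auto simp: g_def intro!: bexI[where x="q+1"])
    next
      case False
      then have "0 < t" using l tl by auto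
      then obtain i y where "i \<in> {1..q}" "y \<in> hverts m q" "Gmap m q M i t y = 1"
        using G_exists(1)[OF q2 part t] by blast
      then show ?thesis by (auto simp: g_def)
    qed
  next
    show "\<exists>k\<in>{1..q+1}. \<exists>y\<in>hverts m q. g k y = 2"
    proof (cases "l = 2")
      case True
      have "replicate m 0 \<in> hverts m q" using q2 by (simp add: hverts_def)
      then show ?thesis using True by (auto simp: g_def intro!: bexI[where x="q+1"])
    next
      case False
      then have "t < q" using l tl t by auto
      then obtain i y where "i \<in> {1..q}" "y \<in> hverts m q" "Gmap m q M i t y = 2"
        using G_exists(2)[OF q2 part t] by blast
      then show ?thesis by (auto simp: g_def)
    qed
  qed
  then show ?thesis by (simp add: g_def)
qed



lemma part2:
  fixes q m :: nat and M :: "nat \<Rightarrow> nat list set"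
  assumes q2: "q \<ge> 2"
    and part: "1 \<le> m \<Longrightarrow> mds2_partition m q M"
    and pc: "perfect_coloring n q (2 * q) f S"
    and SS: "\<forall>i\<in>{1..2*q}. \<forall>j\<in>{1..2*q}.
           S i j = (if i \<le> q then (if j \<le> q then \<alpha> else \<beta>)
                    else (if j \<le> q then \<gamma> else \<delta>))"
    and gam: "\<gamma> = \<alpha> + m" and bet: "\<beta> = \<delta> + m"
    and t1: "t1 \<le> q" and t2: "t2 \<le> q" and n0: "t1 + t2 \<noteq> 0" and n2: "t1 + t2 \<noteq> 2 * q"
  shows "bc_coloring (n + m) q
               (invasion n f (\<lambda>k. if k \<le> q then Gmap m q M k t1 else Gmap m q M (k - q) t2))
               (q * (\<gamma> + \<beta>) - \<gamma> * t1 - \<beta> * t2) (\<gamma> * t1 + \<beta> * t2)"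
proof -
  define g where "g = (\<lambda>k. if k \<le> q then Gmap m q M k t1 else Gmap m q M (k - q) t2)"
  have "bc_coloring (n+m) q (invasion n f g) (q * (\<gamma> + \<beta>) - \<gamma> * t1 - \<beta> * t2) (\<gamma> * t1 + \<beta> * t2)"
  proof (rule invasion_bc[OF pc])
    fix k y show "g k y \<in> {1,2}" using Gmap_12 by (auto simp: g_def)
  next
    fix k y assume k: "k \<in> {1..2*q}" and y: "y \<in> hverts m q"
    define a where "a = g k y"
    have a12: "a = 1 \<or> a = 2" using Gmap_12 by (auto simp: g_def a_def)
    define r where "r = (if k \<le> q then k else k - q)"
    define tt where "tt = (if k \<le> q then t1 else t2)"
    have r: "r \<in> {1..q}" using k unfolding r_def by auto
    have tt: "tt \<le> q" using t1 t2 unfolding tt_def by simp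
    have gk: "g k = Gmap m q M r tt" unfolding g_def r_def tt_def by simp
    define A where "A = (if k \<le> q then \<alpha> else \<gamma>)"
    define B where "B = (if k \<le> q then \<beta> else \<delta>)"
    have sumsplit: "(\<Sum>j\<in>{1..2*q}. if g j y \<noteq> a then S k j else 0) =
       (\<Sum>j\<in>{1..q}. if Gmap m q M j t1 y \<noteq> a then A else 0) +
       (\<Sum>j\<in>{1..q}. if Gmap m q M j t2 y \<noteq> a then B else 0)"
    proof -
      have e1: "(\<Sum>j\<in>{1..q}. if g j y \<noteq> a then S k j else 0) = (\<Sum>j\<in>{1..q}. if Gmap m q M j t1 y \<noteq> a then A else 0)"
        by (rule sum.cong) (use SS k in \<open>auto simp: g_def A_def\<close>)
      have e2: "(\<Sum>j\<in>{1..q}. if g (j+q) y \<noteq> a then S k (j+q) else 0) = (\<Sum>j\<in>{1..q}. if Gmap m q M j t2 y \<noteq> a then B else 0)"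
        by (rule sum.cong) (use SS k in \<open>auto simp: g_def B_def\<close>)
      show ?thesis using sum_split2[of "\<lambda>j. if g j y \<noteq> a then S k j else 0" q] e1 e2 by simp
    qed
    have c1: "(\<Sum>j\<in>{1..q}. if Gmap m q M j t1 y \<noteq> a then A else 0) = A * (if a = 1 then q - t1 else t1)"
      using sum_if_const[of "{1..q}" "\<lambda>j. Gmap m q M j t1 y \<noteq> a" A] G_ne[OF q2 part t1 y, of a] a12 by auto
    have c2: "(\<Sum>j\<in>{1..q}. if Gmap m q M j t2 y \<noteq> a then B else 0) = B * (if a = 1 then q - t2 else t2)"
      using sum_if_const[of "{1..q}" "\<lambda>j. Gmap m q M j t2 y \<noteq> a" B] G_ne[OF q2 part t2 y, of a] a12 by auto
    have nb: "card {y'\<in>hverts m q. hdist y y' = 1 \<and> g k y' \<noteq> g k y} = m * (if a = 1 then q - tt else tt)"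
      using G_nbr[OF q2 part tt y r] gk a_def by simp
    have ar: "\<gamma>*(q-t1) + \<beta>*(q-t2) = q*(\<gamma>+\<beta>) - \<gamma>*t1 - \<beta>*t2" by (rule arith2[OF t1 t2])
    show "(\<Sum>j\<in>{1..2*q}. if g j y \<noteq> g k y then S k j else 0) +
       card {y'\<in>hverts m q. hdist y y' = 1 \<and> g k y' \<noteq> g k y} =
       (if g k y = 1 then q * (\<gamma> + \<beta>) - \<gamma> * t1 - \<beta> * t2 else \<gamma> * t1 + \<beta> * t2)"
    proof (cases "k \<le> q")
      case True
      then have "A = \<alpha>" "B = \<beta>" "tt = t1" unfolding A_def B_def tt_def by simp_all
      then show ?thesis using sumsplit c1 c2 nb a12 gam ar unfolding a_def[symmetric]
        by (auto simp: algebra_simps)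
    next
      case False
      then have "A = \<gamma>" "B = \<delta>" "tt = t2" unfolding A_def B_def tt_def by simp_all
      then show ?thesis using sumsplit c1 c2 nb a12 bet ar unfolding a_def[symmetric]
        by (auto simp: algebra_simps)
    qed
  next
    show "\<exists>k\<in>{1..2*q}. \<exists>y\<in>hverts m q. g k y = 1"
    proof (cases "0 < t1")
      case True
      then obtain i y where "i \<in> {1..q}" "y \<in> hverts m q" "Gmap m q M i t1 y = 1"
        using G_exists(1)[OF q2 part t1] by blast
      then show ?thesis by (auto simp: g_def intro!: bexI[where x=i])
    next
      case False
      then have "0 < t2" using n0 by simp
      then obtain i y where "i \<in> {1..q}" "y \<in> hverts m q" "Gmap m q M i t2 y = 1"
        using G_exists(1)[OF q2 part t2] by blast
      then show ?thesis by (auto simp: g_def intro!: bexI[where x="i+q"])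
    qed
  next
    show "\<exists>k\<in>{1..2*q}. \<exists>y\<in>hverts m q. g k y = 2"
    proof (cases "t1 < q")
      case True
      then obtain i y where "i \<in> {1..q}" "y \<in> hverts m q" "Gmap m q M i t1 y = 2"
        using G_exists(2)[OF q2 part t1] by blast
      then show ?thesis by (auto simp: g_def intro!: bexI[where x=i])
    next
      case False
      then have "t2 < q" using n2 t1 t2 by simp
      then obtain i y where "i \<in> {1..q}" "y \<in> hverts m q" "Gmap m q M i t2 y = 2"
        using G_exists(2)[OF q2 part t2] by blast
      then show ?thesis by (auto simp: g_def intro!: bexI[where x="i+q"])
    qed
  qed
  then show ?thesis by (simp add: g_def)
qed


theorem proposition9:
  fixes q m :: nat and M :: "nat \<Rightarrow> nat list set"
  assumes q2: "q \<ge> 2"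
    and part: "1 \<le> m \<Longrightarrow> mds2_partition m q M"
  shows
    "(\<forall>n f S \<alpha> \<alpha>' \<beta> \<gamma> \<delta>.
        perfect_coloring n q (q + 1) f S \<and>
        (\<forall>i\<in>{1..q}. S i i = \<alpha>') \<and>
        (\<forall>i\<in>{1..q}. \<forall>j\<in>{1..q}. i \<noteq> j \<longrightarrow> S i j = \<alpha>) \<and>
        (\<forall>i\<in>{1..q}. S i (q + 1) = \<beta>) \<and>
        (\<forall>j\<in>{1..q}. S (q + 1) j = \<gamma>) \<and>
        S (q + 1) (q + 1) = \<delta> \<and>
        \<gamma> = \<alpha> + m
      \<longrightarrow> (\<forall>t l. t \<le> q \<and> l \<in> {1, 2} \<and> t * (l - 1) + (q - t) * (2 - l) \<noteq> 0 \<longrightarrow>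
             bc_coloring (n + m) q
               (invasion n f (\<lambda>k. if k \<le> q then Gmap m q M k t else (\<lambda>y. l)))
               (\<gamma> * (q - t) + \<beta> * (l - 1)) (\<gamma> * t + \<beta> * (2 - l))))
     \<and>
     (\<forall>n f S \<alpha> \<beta> \<gamma> \<delta>.
        perfect_coloring n q (2 * q) f S \<and>
        (\<forall>i\<in>{1..2*q}. \<forall>j\<in>{1..2*q}.
           S i j = (if i \<le> q then (if j \<le> q then \<alpha> else \<beta>)
                    else (if j \<le> q then \<gamma> else \<delta>))) \<and>
        \<gamma> = \<alpha> + m \<and> \<beta> = \<delta> + m
      \<longrightarrow> (\<forall>t1 t2. t1 \<le> q \<and> t2 \<le> q \<and> t1 + t2 \<noteq> 0 \<and> t1 + t2 \<noteq> 2 * q \<longrightarrow>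
             bc_coloring (n + m) q
               (invasion n f (\<lambda>k. if k \<le> q then Gmap m q M k t1 else Gmap m q M (k - q) t2))
               (q * (\<gamma> + \<beta>) - \<gamma> * t1 - \<beta> * t2) (\<gamma> * t1 + \<beta> * t2)))"
  proof (intro conjI allI impI)
  fix n f S \<alpha> \<alpha>' \<beta> \<gamma> \<delta> t l
  assume H: "perfect_coloring n q (q + 1) f S \<and>
        (\<forall>i\<in>{1..q}. S i i = \<alpha>') \<and>
        (\<forall>i\<in>{1..q}. \<forall>j\<in>{1..q}. i \<noteq> j \<longrightarrow> S i j = \<alpha>) \<and>
        (\<forall>i\<in>{1..q}. S i (q + 1) = \<beta>) \<and>
        (\<forall>j\<in>{1..q}. S (q + 1) j = \<gamma>) \<and>
        S (q + 1) (q + 1) = \<delta> \<and>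
        \<gamma> = \<alpha> + m"
    and T: "t \<le> q \<and> l \<in> {1, 2} \<and> t * (l - 1) + (q - t) * (2 - l) \<noteq> 0"
  show "bc_coloring (n + m) q
               (invasion n f (\<lambda>k. if k \<le> q then Gmap m q M k t else (\<lambda>y. l)))
               (\<gamma> * (q - t) + \<beta> * (l - 1)) (\<gamma> * t + \<beta> * (2 - l))"
    by (rule part1[OF q2 part, where S=S and n=n and f=f and \<alpha>'=\<alpha>' and \<alpha>=\<alpha> and \<beta>=\<beta> and \<gamma>=\<gamma> and t=t and l=l]) (use H T in simp_all)
next
  fix n f S \<alpha> \<beta> \<gamma> \<delta> t1 t2
  assume H: "perfect_coloring n q (2 * q) f S \<and>
        (\<forall>i\<in>{1..2*q}. \<forall>j\<in>{1..2*q}.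
           S i j = (if i \<le> q then (if j \<le> q then \<alpha> else \<beta>)
                    else (if j \<le> q then \<gamma> else \<delta>))) \<and>
        \<gamma> = \<alpha> + m \<and> \<beta> = \<delta> + m"
    and T: "t1 \<le> q \<and> t2 \<le> q \<and> t1 + t2 \<noteq> 0 \<and> t1 + t2 \<noteq> 2 * q"
  show "bc_coloring (n + m) q
               (invasion n f (\<lambda>k. if k \<le> q then Gmap m q M k t1 else Gmap m q M (k - q) t2))
               (q * (\<gamma> + \<beta>) - \<gamma> * t1 - \<beta> * t2) (\<gamma> * t1 + \<beta> * t2)"
    by (rule part2[OF q2 part, where S=S and n=n and f=f and \<alpha>=\<alpha> and \<beta>=\<beta> and \<gamma>=\<gamma> and \<delta>=\<delta>]) (use H T in simp_all)
qed

end
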